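(* Let $n$ be a fixed positive integer and, for $k\ge0$, let \[ C_k=\sum_{j=0}^{n-1}\frac{n^j}{j!}+\frac{n^{n-1}}{(n-1)!}\left(1+n+\cfrac{a_1}{b_1+\cfrac{a_2}{\ddots+\cfrac{a_k}{b_k}}}\right),\qquad a_m=-n(m+n-1),\ b_m=m+2n+1, \] (with the continued fraction term equal to $0$ when $k=0$). Then, as $k\to\infty$, \[ \left|e^n-C_k\right|=O\left(\frac{n^{k+1}}{(k+1)(k+2)\,(n)_{k+2}}\right). \]
   Context: $(a)_0=1$ and $(a)_m=a(a+1)\cdots(a+m-1)$ denotes the Pochhammer symbol. *)

theory Defs
  imports "HOL-Analysis.Analysis" "HOL-Library.Landau_Symbols"
begin

primrec contfrac :: "(nat \<Rightarrow> real) \<Rightarrow> (nat \<Rightarrow> real) \<Rightarrow> nat \<Rightarrow> nat \<Rightarrow> real" where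
  "contfrac a b m 0 = 0"
| "contfrac a b m (Suc j) = a m / (b m + contfrac a b (Suc m) j)"

definition cf_a :: "nat \<Rightarrow> nat \<Rightarrow> real" where
  "cf_a n m = - real n * (real m + real n - 1)"

definition cf_b :: "nat \<Rightarrow> nat \<Rightarrow> real" where
  "cf_b n m = real m + 2 * real n + 1"

definition C_approx :: "nat \<Rightarrow> nat \<Rightarrow> real" where
  "C_approx n k = (\<Sum>j<n. real n ^ j / fact j)
     + real n ^ (n - 1) / fact (n - 1) * (1 + real n + contfrac (cf_a n) (cf_b n) 1 k)"

end

theory Submission
  imports Defs
begin

fun cfx :: "(nat \<Rightarrow> real) \<Rightarrow> (nat \<Rightarrow> real) \<Rightarrow> nat \<Rightarrow> nat \<Rightarrow> real \<Rightarrow> real" where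
  "cfx a b m 0 t = t"
| "cfx a b m (Suc j) t = a m / (b m + cfx a b (Suc m) j t)"

lemma contfrac_cfx: "contfrac a b m j = cfx a b m j 0"
  by (induction j arbitrary: m) auto

lemma cfx_snoc: "cfx a b m (Suc j) t = cfx a b m j (a (m+j) / (b (m+j) + t))"
  by (induction j arbitrary: m) auto

fun pp :: "nat \<Rightarrow> nat \<Rightarrow> real" where
  "pp n 0 = 1" | "pp n (Suc 0) = 0"
| "pp n (Suc (Suc k)) = cf_b n (Suc k) * pp n (Suc k) + cf_a n (Suc k) * pp n k"

fun qq :: "nat \<Rightarrow> nat \<Rightarrow> real" where
  "qq n 0 = 0" | "qq n (Suc 0) = 1"
| "qq n (Suc (Suc k)) = cf_b n (Suc k) * qq n (Suc k) + cf_a n (Suc k) * qq n k"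

lemma cfx_conv:
  assumes "t \<ge> - real n"
  shows "cfx (cf_a n) (cf_b n) 1 k t = (pp n (Suc k) + t * pp n k) / (qq n (Suc k) + t * qq n k)"
  using assms
proof (induction k arbitrary: t)
  case 0
  then show ?case by simp
next
  case (Suc k)
  define d where "d = cf_b n (Suc k) + t"
  define a where "a = cf_a n (Suc k)"
  have d: "d \<ge> real k + real n + 2" using Suc.prems by (simp add: d_def cf_b_def)
  have dpos: "d > 0" using d by linarith
  have "a / d \<ge> - real n"
  proof -
    have "real n * (real k + real n) \<le> real n * d" using d by (intro mult_left_mono) auto
    then have "- a \<le> real n * d" by (simp add: a_def cf_a_def algebra_simps)
    then show ?thesis using dpos by (simp add: field_simps)
  qed
  then have IH: "cfx (cf_a n) (cf_b n) 1 k (a/d) = (pp n (Suc k) + a/d * pp n k) / (qq n (Suc k) + a/d * qq n k)"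
    using Suc.IH by blast
  have e1: "pp n (Suc k) + a/d * pp n k = (d * pp n (Suc k) + a * pp n k) / d" using dpos by (simp add: field_simps)
  have e2: "qq n (Suc k) + a/d * qq n k = (d * qq n (Suc k) + a * qq n k) / d" using dpos by (simp add: field_simps)
  have "cfx (cf_a n) (cf_b n) 1 (Suc k) t = cfx (cf_a n) (cf_b n) 1 k (a/d)"
    using cfx_snoc[of "cf_a n" "cf_b n" 1 k t] by (simp only: a_def d_def) (simp add: add.commute)
  also have "\<dots> = (d * pp n (Suc k) + a * pp n k) / (d * qq n (Suc k) + a * qq n k)"
    using IH e1 e2 dpos by simp
  also have "\<dots> = (pp n (Suc (Suc k)) + t * pp n (Suc k)) / (qq n (Suc (Suc k)) + t * qq n (Suc k))"
    by (simp add: d_def a_def algebra_simps)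
  finally show ?case .
qed


definition tt :: "nat \<Rightarrow> nat \<Rightarrow> real" where
  "tt n m = real n ^ m / pochhammer (real n) m"

definition trm :: "nat \<Rightarrow> nat \<Rightarrow> real" where
  "trm n j = real n * tt n (j+1) / (real j * real (j+1))"

lemma poch_pos: "n > 0 \<Longrightarrow> pochhammer (real n) m > 0"
  by (rule pochhammer_pos) simp

lemma tt_Suc: "n > 0 \<Longrightarrow> tt n (Suc m) = tt n m * real n / (real n + real m)"
  using poch_pos[of n m] by (simp add: tt_def pochhammer_Suc field_simps)

lemma tt_nonneg: "tt n m \<ge> 0"
  unfolding tt_def by (cases "n = 0") (auto intro!: divide_nonneg_pos poch_pos simp: pochhammer_0_left)

lemma trm_nonneg: "trm n j \<ge> 0"
  unfolding trm_def using tt_nonneg[of n "j+1"] by simp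

lemma qq_closed:
  assumes "n > 0"
  shows "qq n (Suc k) = real (k+1) * pochhammer (real n) (k+1) / real n
       \<and> qq n (Suc (Suc k)) = real (k+2) * pochhammer (real n) (k+2) / real n"
proof (induction k)
  case 0
  then show ?case using assms
    by (simp add: cf_a_def cf_b_def pochhammer_Suc numeral_2_eq_2 field_simps)
next
  case (Suc k)
  let ?P = "pochhammer (real n) (k+1)"
  have p2: "pochhammer (real n) (k+2) = ?P * (real n + real k + 1)"
    by (simp add: pochhammer_Suc numeral_2_eq_2 add.assoc)
  have p3': "pochhammer (real n) (k+3) = pochhammer (real n) (k+2) * (real n + real k + 2)"
    using pochhammer_Suc[of "real n" "k+2"] by (simp add: numeral_3_eq_3 numeral_2_eq_2 add.assoc)
  have p3: "pochhammer (real n) (k+3) = ?P * (real n + real k + 1) * (real n + real k + 2)"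
    unfolding p3' p2 ..
  have "qq n (Suc (Suc (Suc k))) = cf_b n (Suc (Suc k)) * qq n (Suc (Suc k)) + cf_a n (Suc (Suc k)) * qq n (Suc k)"
    by simp
  also have "\<dots> = (cf_b n (Suc (Suc k)) * (real k + 2) * (real n + real k + 1) + cf_a n (Suc (Suc k)) * (real k + 1)) * ?P / real n"
  proof -
    have h1: "qq n (Suc k) = real (k+1) * ?P / real n" and h2: "qq n (Suc (Suc k)) = real (k+2) * pochhammer (real n) (k+2) / real n"
      using Suc.IH by blast+
    show ?thesis unfolding h1 h2 p2 using assms by (simp add: field_simps)
  qed
  also have "cf_b n (Suc (Suc k)) * (real k + 2) * (real n + real k + 1) + cf_a n (Suc (Suc k)) * (real k + 1)
     = (real k + 3) * (real n + real k + 1) * (real n + real k + 2)"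
    by (simp add: cf_a_def cf_b_def algebra_simps)
  also have "(real k + 3) * (real n + real k + 1) * (real n + real k + 2) * ?P / real n = real (k+3) * pochhammer (real n) (k+3) / real n"
    unfolding p3 by (simp add: algebra_simps)
  finally have h3: "qq n (Suc (Suc (Suc k))) = real (k+3) * pochhammer (real n) (k+3) / real n" .
  have e: "Suc k + 1 = k + 2" "Suc k + 2 = k + 3" "Suc (Suc k) = Suc k + 1" by simp_all
  show ?case using h3 Suc.IH unfolding e by (simp del: qq.simps add: numeral_3_eq_3 numeral_2_eq_2)
qed

lemma qq_Suc: "n > 0 \<Longrightarrow> qq n (Suc k) = real (k+1) * pochhammer (real n) (k+1) / real n"
  using qq_closed by blast

lemma alg1:
  fixes P x n j :: real
  assumes "P \<noteq> 0" "n \<noteq> 0" "j > 0"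
  shows "(j+1) * P / n * (n * (x / P) / (j * (j+1))) = x / j"
proof -
  have "j + 1 \<noteq> 0" using assms by simp
  then show ?thesis using assms by (simp add: divide_simps)
qed

lemma qq_trm1:
  assumes "n > 0" "j \<ge> 1"
  shows "qq n (Suc j) * trm n j = real n ^ (j+1) / real j"
proof -
  have "qq n (Suc j) * trm n j = (real j+1) * pochhammer (real n) (j+1) / real n *
     (real n * (real n ^ (j+1) / pochhammer (real n) (j+1)) / (real j * (real j+1)))"
    using assms by (simp add: qq_Suc trm_def tt_def)
  also have "\<dots> = real n ^ (j+1) / real j"
    by (rule alg1) (use assms poch_pos[of n "j+1"] in auto)
  finally show ?thesis .
qed

lemma alg2:
  fixes P x n j :: real
  assumes "P \<noteq> 0" "n > 0" "j > 0"
  shows "j * P / n * (n * (n * x / (P * (n + j))) / (j * (j+1))) = n * x / ((n + j) * (j+1))"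
proof -
  have "j + 1 \<noteq> 0" "n + j \<noteq> 0" using assms by auto
  then show ?thesis using assms by (simp add: divide_simps)
qed

lemma qq_trm0:
  assumes "n > 0" "j \<ge> 1"
  shows "qq n j * trm n j = real n ^ (j+1) / ((real n + real j) * real (j+1))"
proof -
  obtain i where j: "j = Suc i" using assms by (cases j) auto
  have "qq n j * trm n j = real j * pochhammer (real n) j / real n *
     (real n * (real n * real n ^ j / (pochhammer (real n) j * (real n + real j))) / (real j * (real j+1)))"
    using assms unfolding j by (simp add: qq_Suc trm_def tt_def pochhammer_Suc)
  also have "\<dots> = real n * real n ^ j / ((real n + real j) * (real j+1))"
    by (rule alg2) (use assms poch_pos[of n j] in auto)
  finally show ?thesis by simp
qed


definition SS :: "nat \<Rightarrow> nat \<Rightarrow> real" where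
  "SS n k = - (\<Sum>j<Suc k. trm n j)"

lemma trm0[simp]: "trm n 0 = 0" by (simp add: trm_def)

lemma key_zero:
  assumes "n > 0"
  shows "qq n (Suc (Suc (Suc k))) * trm n (Suc (Suc k)) + cf_a n (Suc (Suc k)) * (qq n (Suc k) * trm n (Suc k)) = 0"
proof -
  have a: "qq n (Suc (Suc (Suc k))) * trm n (Suc (Suc k)) = real n ^ (Suc (Suc k) + 1) / real (Suc (Suc k))"
    using qq_trm1[OF assms, of "Suc (Suc k)"] by simp
  have b: "qq n (Suc k) * trm n (Suc k) = real n ^ (Suc k + 1) / ((real n + real (Suc k)) * real (Suc k + 1))"
    using qq_trm0[OF assms, of "Suc k"] by simp
  have c: "real n + real (Suc k) \<noteq> 0" "real (Suc k + 1) \<noteq> 0" "real (Suc (Suc k)) \<noteq> 0" by linarith+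
  show ?thesis unfolding a b using c
    by (simp add: cf_a_def divide_simps)
qed

lemma pp_closed:
  assumes "n > 0"
  shows "pp n (Suc k) = qq n (Suc k) * SS n k \<and> pp n (Suc (Suc k)) = qq n (Suc (Suc k)) * SS n (Suc k)"
proof (induction k)
  case 0
  have "qq n (Suc (Suc 0)) * trm n 1 = real n * real n"
    using qq_trm1[OF assms, of 1] by simp
  then show ?case by (simp add: SS_def cf_a_def cf_b_def)
next
  case (Suc k)
  have h1: "pp n (Suc k) = qq n (Suc k) * SS n k" and h2: "pp n (Suc (Suc k)) = qq n (Suc (Suc k)) * SS n (Suc k)"
    using Suc.IH by blast+
  have s1: "SS n (Suc k) = SS n (Suc (Suc k)) + trm n (Suc (Suc k))" by (simp add: SS_def)
  have s0: "SS n k = SS n (Suc (Suc k)) + trm n (Suc k) + trm n (Suc (Suc k))" by (simp add: SS_def)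
  have q3: "qq n (Suc (Suc (Suc k))) = cf_b n (Suc (Suc k)) * qq n (Suc (Suc k)) + cf_a n (Suc (Suc k)) * qq n (Suc k)"
    by simp
  have "pp n (Suc (Suc (Suc k))) = cf_b n (Suc (Suc k)) * pp n (Suc (Suc k)) + cf_a n (Suc (Suc k)) * pp n (Suc k)"
    by simp
  also have "\<dots> = qq n (Suc (Suc (Suc k))) * SS n (Suc (Suc k))
     + (qq n (Suc (Suc (Suc k))) * trm n (Suc (Suc k)) + cf_a n (Suc (Suc k)) * (qq n (Suc k) * trm n (Suc k)))"
    unfolding h1 h2 s1 s0 q3 by (simp add: algebra_simps)
  also have "\<dots> = qq n (Suc (Suc (Suc k))) * SS n (Suc (Suc k))"
    using key_zero[OF assms, of k] by simp
  finally show ?case using h2 by blast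
qed

lemma contfrac_closed:
  assumes "n > 0"
  shows "contfrac (cf_a n) (cf_b n) 1 k = SS n k"
proof -
  have "contfrac (cf_a n) (cf_b n) 1 k = pp n (Suc k) / qq n (Suc k)"
    using cfx_conv[where t=0 and n=n and k=k] by (simp add: contfrac_cfx)
  moreover have "qq n (Suc k) > 0"
    using assms poch_pos[of n "k+1"] by (simp add: qq_Suc)
  ultimately show ?thesis using pp_closed[OF assms, of k] by simp
qed


lemma fact_split:
  assumes "n > 0"
  shows "(fact (i + n) :: real) = fact (n - 1) * pochhammer (real n) (i + 1)"
proof -
  have "(fact (i + n) :: real) = pochhammer 1 ((n - 1) + (i + 1))"
    using assms by (simp add: pochhammer_fact ac_simps)
  also have "\<dots> = pochhammer 1 (n - 1) * pochhammer (1 + of_nat (n - 1)) (i + 1)"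
    by (rule pochhammer_product')
  also have "(1 :: real) + of_nat (n - 1) = real n" using assms by (simp add: of_nat_diff)
  finally show ?thesis by (simp add: pochhammer_fact)
qed

lemma exp_split:
  assumes "n > 0"
  shows "summable (\<lambda>m. tt n (m+1))"
    "exp (real n) = (\<Sum>j<n. real n ^ j / fact j) + real n ^ (n - 1) / fact (n - 1) * (\<Sum>m. tt n (m+1))"
proof -
  define f where "f = (\<lambda>i. real n ^ i / fact i)"
  define c where "c = real n ^ (n - 1) / fact (n - 1)"
  have cpos: "c > 0" using assms by (simp add: c_def)
  have fs: "f sums exp (real n)"
    using exp_converges[of "real n"] unfolding f_def by (simp add: divide_inverse mult.commute)
  have fi: "f (i + n) = c * tt n (i + 1)" for i
  proof -
    have "real n ^ (i + n) = real n ^ (n - 1) * real n ^ (i + 1)"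
    proof -
      have "i + n = (n - 1) + (i + 1)" using assms by simp
      then show ?thesis by (simp only: power_add)
    qed
    then show ?thesis using fact_split[OF assms, of i]
      by (simp add: f_def c_def tt_def)
  qed
  have s1: "summable (\<lambda>i. f (i + n))"
    using summable_ignore_initial_segment[OF sums_summable[OF fs]] by simp
  have eq: "(\<lambda>m. tt n (m+1)) = (\<lambda>i. f (i + n) / c)"
    using fi cpos by auto
  show s2: "summable (\<lambda>m. tt n (m+1))"
    unfolding eq by (rule summable_divide[OF s1])
  have "exp (real n) = (\<Sum>i. f (i + n)) + (\<Sum>i<n. f i)"
    using suminf_split_initial_segment[OF sums_summable[OF fs], of n] sums_unique[OF fs] by simp
  also have "(\<Sum>i. f (i + n)) = c * (\<Sum>m. tt n (m+1))"
    unfolding fi by (rule suminf_mult[OF s2])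
  finally show "exp (real n) = (\<Sum>j<n. real n ^ j / fact j) + real n ^ (n - 1) / fact (n - 1) * (\<Sum>m. tt n (m+1))"
    by (simp add: f_def c_def)
qed

lemma tele:
  assumes "n > 0"
  shows "(\<Sum>j<Suc K. tt n (j+1) + trm n j) = 1 + real n - real n * tt n (K+1) / real (K+1)"
proof (induction K)
  case 0
  then show ?case using assms by (simp add: tt_def)
next
  case (Suc K)
  define T where "T = tt n (K+1)"
  have t2: "tt n (Suc (Suc K)) = T * real n / (real n + real K + 1)"
    using tt_Suc[OF assms, of "K+1"] by (simp add: T_def add.assoc)
  have tr: "trm n (Suc K) = real n * tt n (Suc (Suc K)) / ((real K + 1) * (real K + 2))"
    by (simp add: trm_def) (simp add: algebra_simps)
  have "tt n (Suc (Suc K)) + trm n (Suc K) = real n * T / (real K + 1) - real n * tt n (Suc (Suc K)) / (real K + 2)"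
    unfolding tr unfolding t2 using assms
    apply (simp add: divide_simps)
    apply (simp add: algebra_simps)
    done
  then show ?case using Suc.IH by (simp add: T_def add.commute)
qed

lemma vsums:
  assumes "n > 0"
  shows "(\<lambda>j. tt n (j+1) + trm n j) sums (1 + real n)"
proof -
  have z: "(\<lambda>K. tt n (K+1)) \<longlonglongrightarrow> 0"
    using summable_LIMSEQ_zero[OF exp_split(1)[OF assms]] .
  have "(\<lambda>K. real n * tt n (K+1) * inverse (real (Suc K))) \<longlonglongrightarrow> real n * 0 * 0"
    by (intro tendsto_mult tendsto_const z LIMSEQ_inverse_real_of_nat)
  then have "(\<lambda>K. 1 + real n - real n * tt n (K+1) / real (K+1)) \<longlonglongrightarrow> 1 + real n - 0"
    by (intro tendsto_diff tendsto_const) (simp add: divide_inverse)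
  then have "(\<lambda>K. \<Sum>j<Suc K. tt n (j+1) + trm n j) \<longlonglongrightarrow> 1 + real n"
    using tele[OF assms] by simp
  then show ?thesis unfolding sums_def by (rule filterlim_sequentially_Suc[THEN iffD1])
qed

lemma trm_sums:
  assumes "n > 0"
  shows "trm n sums (1 + real n - (\<Sum>m. tt n (m+1)))"
proof -
  have "(\<lambda>j. (tt n (j+1) + trm n j) - tt n (j+1)) sums (1 + real n - (\<Sum>m. tt n (m+1)))"
    by (intro sums_diff vsums assms summable_sums exp_split(1))
  then show ?thesis by simp
qed


lemma frac_mono_aux:
  fixes x y z w :: real
  assumes "x * z \<le> w * y" "y > 0" "z > 0"
  shows "x / y \<le> w / z"
  using assms by (simp add: divide_simps)

lemma trm_ratio:
  assumes "n > 0" "j \<ge> n"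
  shows "trm n (Suc j) \<le> trm n j / 2"
proof -
  define T where "T = tt n (Suc j)"
  have T0: "T \<ge> 0" unfolding T_def by (rule tt_nonneg)
  have a: "trm n (Suc j) = T * (real n * real n / ((real n + real j + 1) * (real j + 1) * (real j + 2)))"
    using tt_Suc[OF assms(1), of "Suc j"] unfolding T_def
    by (simp add: trm_def) (simp add: algebra_simps)
  have b: "trm n j / 2 = T * (real n / (2 * real j * (real j + 1)))"
    unfolding T_def by (simp add: trm_def) (simp add: algebra_simps)
  have jn: "real j \<ge> real n" "real n > 0" using assms by auto
  have "real n * real n / ((real n + real j + 1) * (real j + 1) * (real j + 2)) \<le> real n / (2 * real j * (real j + 1))"
  proof -
    have "2 * real n * real j \<le> (real n + real j + 1) * (real j + 2)"
    proof -
      have "real n * real j \<le> real j * real j" using jn by (intro mult_right_mono) auto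
      moreover have "(real n + real j + 1) * (real j + 2) = real n * real j + 2 * real n + real j * real j + 3 * real j + 2"
        by (simp add: algebra_simps)
      ultimately show ?thesis using jn by linarith
    qed
    then have "(real n * (real j + 1)) * (2 * real n * real j) \<le> (real n * (real j + 1)) * ((real n + real j + 1) * (real j + 2))"
      by (rule mult_left_mono) (use jn in simp)
    moreover have "(real n * (real j + 1)) * (2 * real n * real j) = real n * real n * (2 * real j * (real j + 1))"
      by (simp add: algebra_simps)
    moreover have "(real n * (real j + 1)) * ((real n + real j + 1) * (real j + 2)) = real n * ((real n + real j + 1) * (real j + 1) * (real j + 2))"
      by (simp add: algebra_simps)
    ultimately have "real n * real n * (2 * real j * (real j + 1)) \<le> real n * ((real n + real j + 1) * (real j + 1) * (real j + 2))"
      by simp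
    moreover have "(real n + real j + 1) * (real j + 1) * (real j + 2) > 0" "2 * real j * (real j + 1) > 0"
      using jn by auto
    ultimately show ?thesis by (rule frac_mono_aux)
  qed
  then show ?thesis unfolding a b using T0 by (rule mult_left_mono)
qed


lemma trm_geom:
  assumes "n > 0" "k \<ge> n"
  shows "trm n (i + Suc k) \<le> trm n (Suc k) * (1/2) ^ i"
proof (induction i)
  case 0
  then show ?case by simp
next
  case (Suc i)
  have "trm n (Suc i + Suc k) = trm n (Suc (i + Suc k))" by simp
  also have "\<dots> \<le> trm n (i + Suc k) / 2"
    by (rule trm_ratio) (use assms in auto)
  also have "\<dots> \<le> trm n (Suc k) * (1/2) ^ i / 2"
    using Suc.IH by simp
  finally show ?case by simp
qed

lemma tail_bound:
  assumes "n > 0" "k \<ge> n"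
  shows "(\<Sum>i. trm n (i + Suc k)) \<le> 2 * trm n (Suc k)"
proof -
  have s: "summable (\<lambda>i. trm n (i + Suc k))"
    using summable_ignore_initial_segment[OF sums_summable[OF trm_sums[OF assms(1)]]] .
  have g: "(\<lambda>i. trm n (Suc k) * (1/2) ^ i) sums (trm n (Suc k) * 2)"
    using sums_mult[OF geometric_sums[of "1/2::real"], of "trm n (Suc k)"] by simp
  have "(\<Sum>i. trm n (i + Suc k)) \<le> (\<Sum>i. trm n (Suc k) * (1/2) ^ i)"
    by (rule suminf_le) (use trm_geom[OF assms] s sums_summable[OF g] in auto)
  also have "\<dots> = 2 * trm n (Suc k)" using sums_unique[OF g] by simp
  finally show ?thesis .
qed

lemma err_eq:
  assumes "n > 0"
  shows "exp (real n) - C_approx n k = - (real n ^ (n - 1) / fact (n - 1)) * (\<Sum>i. trm n (i + Suc k))"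
proof -
  define c where "c = real n ^ (n - 1) / fact (n - 1)"
  define T where "T = (\<Sum>m. tt n (m+1))"
  have R: "1 + real n - T = (\<Sum>i. trm n (i + Suc k)) + (\<Sum>j<Suc k. trm n j)"
    using suminf_split_initial_segment[OF sums_summable[OF trm_sums[OF assms]], of "Suc k"]
      sums_unique[OF trm_sums[OF assms]] by (simp add: T_def)
  have "exp (real n) - C_approx n k = c * T - c * (1 + real n + SS n k)"
    using exp_split(2)[OF assms] unfolding C_approx_def contfrac_closed[OF assms] by (simp add: c_def T_def)
  also have "\<dots> = - c * (\<Sum>i. trm n (i + Suc k))"
    using R by (simp add: SS_def algebra_simps)
  finally show ?thesis by (simp add: c_def)
qed

theorem corollary2p5:
  fixes n :: nat
  assumes "n > 0"
  shows "(\<lambda>k. \<bar>exp (real n) - C_approx n k\<bar>)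
    \<in> O[sequentially](\<lambda>k. real n ^ (k + 1) /
          (real (k + 1) * real (k + 2) * pochhammer (real n) (k + 2)))"
proof (rule bigoI)
  define c where "c = real n ^ (n - 1) / fact (n - 1)"
  have c0: "c \<ge> 0" by (simp add: c_def)
  show "eventually (\<lambda>k. norm \<bar>exp (real n) - C_approx n k\<bar> \<le> (2 * c * real n ^ 2) *
     norm (real n ^ (k + 1) / (real (k + 1) * real (k + 2) * pochhammer (real n) (k + 2)))) sequentially"
    using eventually_ge_at_top[of n]
  proof eventually_elim
    case (elim k)
    define g where "g = real n ^ (k + 1) / (real (k + 1) * real (k + 2) * pochhammer (real n) (k + 2))"
    have g0: "g \<ge> 0" using poch_pos[OF assms, of "k+2"] by (simp add: g_def)
    have tg: "trm n (Suc k) = real n ^ 2 * g"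
      by (simp add: trm_def tt_def g_def power2_eq_square) (simp add: algebra_simps)
    have ss: "summable (\<lambda>i. trm n (i + Suc k))"
      using summable_ignore_initial_segment[OF sums_summable[OF trm_sums[OF assms]]] .
    have s0: "(\<Sum>i. trm n (i + Suc k)) \<ge> 0"
      by (rule suminf_nonneg[OF ss]) (rule trm_nonneg)
    have "norm \<bar>exp (real n) - C_approx n k\<bar> = c * (\<Sum>i. trm n (i + Suc k))"
      using err_eq[OF assms, of k] s0 c0 by (simp add: c_def abs_mult)
    also have "\<dots> \<le> c * (2 * trm n (Suc k))"
      by (rule mult_left_mono[OF tail_bound[OF assms elim] c0])
    also have "\<dots> = (2 * c * real n ^ 2) * norm g"
      using g0 by (simp add: tg)
    finally show ?case by (simp add: g_def)
  qed
qed

end
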